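(* The composite map $$(\pi_0^{\mathrm{N}}\mathcal{F}_2)(k)\xrightarrow{\pi_0^{\mathrm{N}}\mathrm{B\acute{e}z}_2}(\pi_0^{\mathrm{N}}\mathcal{S}_2)(k)\xrightarrow{\overline{q}_2\times\det}\mathrm{MW}^{\mathrm{s}}_2(k)\times_{k^\times/k^{\times2}}k^\times$$ is injective.
   Context: Let $k$ be a field. $\mathcal{F}_2(R)$ is the set of pairs $(A,B)$ of polynomials in $R[X]$, $A$ monic of degree 2, $\deg B<2$, $\mathrm{res}_{2,2}(A,B)\in R^\times$; $\mathcal{S}_2(R)$ the set of symmetric $2\times2$ matrices over $R$ with invertible determinant. For a functor $\mathcal{G}$ on $k$-algebras, $(\pi_0^{\mathrm{N}}\mathcal{G})(k)$ is the coequalizer of $\mathcal{G}(k[T])\rightrightarrows\mathcal{G}(k)$ (evaluation at $T=0,1$). $\mathrm{B\acute{e}z}_2(A,B)=[c_{p,q}]$ where $\frac{A(X)B(Y)-A(Y)B(X)}{X-Y}=\sum c_{p,q}X^{p-1}Y^{q-1}$. $\mathrm{MW}^{\mathrm{s}}_2(k)$ is the set of stable isomorphism classes of rank-2 non-degenerate symmetric bilinear forms over $k$; $\overline{q}_2$ sends the homotopy class of a matrix to the stable class of its form (well defined). The fibre product is over the discriminant (determinant mod squares) and $k^\times\to k^\times/k^{\times2}$. *)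

theory Defs
  imports "Subresultants.Resultant_Prelim"
begin

definition res22 :: "'r::comm_ring_1 poly \<Rightarrow> 'r poly \<Rightarrow> 'r" where
  "res22 A B = det (sylvester_mat_sub 2 2 A B)"

definition F2 :: "'r::comm_ring_1 itself \<Rightarrow> ('r poly \<times> 'r poly) set" where
  "F2 _ = {(A, B). degree A = 2 \<and> coeff A 2 = 1 \<and> degree B < 2 \<and> res22 A B dvd 1}"

text \<open>Evaluation k[T][X] -> k[X] of the coefficients at T = t.\<close>
definition eval_T :: "'a::comm_ring_1 \<Rightarrow> 'a poly poly \<Rightarrow> 'a poly" where
  "eval_T t P = map_poly (\<lambda>c. poly c t) P"

definition naive_htpy :: "('a::comm_ring_1 poly \<times> 'a poly) \<Rightarrow> ('a poly \<times> 'a poly) \<Rightarrow> bool" where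
  "naive_htpy f g \<longleftrightarrow> (\<exists>H G. (H, G) \<in> F2 TYPE('a poly) \<and>
      f = (eval_T 0 H, eval_T 0 G) \<and> g = (eval_T 1 H, eval_T 1 G))"

text \<open>Equality in the coequalizer pi_0^N F_2(k): equivalence relation generated by naive_htpy.\<close>
definition naive_htpy_equiv :: "('a::comm_ring_1 poly \<times> 'a poly) \<Rightarrow> ('a poly \<times> 'a poly) \<Rightarrow> bool" where
  "naive_htpy_equiv = (\<lambda>f g. naive_htpy f g \<or> naive_htpy g f)\<^sup>*\<^sup>*"

text \<open>Bivariate polynomials: outer variable Y, inner variable X.\<close>
definition polyX :: "'a::comm_ring_1 poly \<Rightarrow> 'a poly poly" where
  "polyX A = [:A:]"
definition polyY :: "'a::comm_ring_1 poly \<Rightarrow> 'a poly poly" where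
  "polyY A = map_poly (\<lambda>c. [:c:]) A"

text \<open>Bezout matrix: c_{p,q} is the coefficient of X^(p-1) Y^(q-1) in
  (A(X)B(Y) - A(Y)B(X)) / (X - Y); here indices are 0-based.\<close>
definition bez2 :: "'a::idom poly \<Rightarrow> 'a poly \<Rightarrow> 'a mat" where
  "bez2 A B = (let Q = (THE Q. polyX A * polyY B - polyY A * polyX B
                               = [:[:0, 1:], -1:] * Q)
               in mat 2 2 (\<lambda>(p, q). coeff (coeff Q q) p))"

definition congruent_mat :: "nat \<Rightarrow> 'a::comm_ring_1 mat \<Rightarrow> 'a mat \<Rightarrow> bool" where
  "congruent_mat n M N \<longleftrightarrow> (\<exists>P \<in> carrier_mat n n. det P dvd 1 \<and>
      transpose_mat P * M * P = N)"

definition nondeg_sym :: "nat \<Rightarrow> 'a::comm_ring_1 mat \<Rightarrow> bool" where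
  "nondeg_sym n M \<longleftrightarrow> M \<in> carrier_mat n n \<and> transpose_mat M = M \<and> det M dvd 1"

definition stably_iso :: "nat \<Rightarrow> 'a::comm_ring_1 mat \<Rightarrow> 'a mat \<Rightarrow> bool" where
  "stably_iso n M N \<longleftrightarrow> (\<exists>m C. nondeg_sym m C \<and>
      congruent_mat (n + m) (four_block_mat M (0\<^sub>m n m) (0\<^sub>m m n) C)
                            (four_block_mat N (0\<^sub>m n m) (0\<^sub>m m n) C))"

end

theory Submission
  imports Defs
begin


lemma polyY_lin: "polyY [:b0, b1:] = [:[:b0:], [:b1:]:]"
  unfolding polyY_def by (simp add: map_poly_simps)
lemma polyY_quad: "polyY [:a0, a1, a2:] = [:[:a0:], [:a1:], [:a2:]:]"
  unfolding polyY_def by (simp add: map_poly_simps)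

lemma bez_identity:
  fixes a0 a1 b0 b1 :: "'a::comm_ring_1"
  shows "polyX [:a0, a1, 1:] * polyY [:b0, b1:] - polyY [:a0, a1, 1:] * polyX [:b0, b1:]
     = [:[:0, 1:], -1:] * [: [:a1*b0 - a0*b1, b0:], [:b0, b1:] :]"
  unfolding polyY_lin polyY_quad unfolding polyX_def
  by (simp add: algebra_simps smult_add_right one_pCons)

lemma bez2_eq:
  fixes a0 a1 b0 b1 :: "'a::idom"
  shows "bez2 [:a0, a1, 1:] [:b0, b1:] = mat 2 2 (\<lambda>(i,j). if i = 0 \<and> j = 0 then a1*b0 - a0*b1 else if i = 1 \<and> j = 1 then b1 else b0)"
proof -
  let ?Q = "[: [:a1*b0 - a0*b1, b0:], [:b0, b1:] :] :: 'a poly poly"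
  let ?c = "[:[:0, 1:], -1:] :: 'a poly poly"
  have ne: "?c \<noteq> 0" by simp
  have the: "(THE Q. polyX [:a0, a1, 1:] * polyY [:b0, b1:] - polyY [:a0, a1, 1:] * polyX [:b0, b1:]
                               = ?c * Q) = ?Q"
  proof (rule the_equality)
    show "polyX [:a0, a1, 1:] * polyY [:b0, b1:] - polyY [:a0, a1, 1:] * polyX [:b0, b1:] = ?c * ?Q"
      by (rule bez_identity)
    fix Q assume "polyX [:a0, a1, 1:] * polyY [:b0, b1:] - polyY [:a0, a1, 1:] * polyX [:b0, b1:] = ?c * Q"
    then have "?c * Q = ?c * ?Q" using bez_identity by metis
    then show "Q = ?Q" using ne mult_left_cancel by blast
  qed
  show ?thesis unfolding bez2_def Let_def the
    by (rule eq_matI) (auto simp: less_2_cases_iff)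
qed


lemma det_mat_expand:
  fixes f :: "nat \<times> nat \<Rightarrow> 'a::comm_ring_1"
  shows "det (mat (Suc n) (Suc n) f) = (\<Sum>i<Suc n. f (i,0) * ((-1)^i * det (mat n n (\<lambda>(i',j'). f (if i'<i then i' else Suc i', Suc j')))))"
proof -
  have "det (mat (Suc n) (Suc n) f) = (\<Sum>i<Suc n. mat (Suc n) (Suc n) f $$ (i,0) * cofactor (mat (Suc n) (Suc n) f) i 0)"
    by (rule laplace_expansion_column) auto
  also have "\<dots> = (\<Sum>i<Suc n. f (i,0) * ((-1)^i * det (mat n n (\<lambda>(i',j'). f (if i'<i then i' else Suc i', Suc j')))))"
  proof (rule sum.cong[OF refl])
    fix i assume i: "i \<in> {..<Suc n}"
    have "mat_delete (mat (Suc n) (Suc n) f) i 0 = mat n n (\<lambda>(i',j'). f (if i'<i then i' else Suc i', Suc j'))"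
      unfolding mat_delete_def by (rule eq_matI) (use i in auto)
    then show "mat (Suc n) (Suc n) f $$ (i,0) * cofactor (mat (Suc n) (Suc n) f) i 0 = f (i,0) * ((-1)^i * det (mat n n (\<lambda>(i',j'). f (if i'<i then i' else Suc i', Suc j'))))"
      using i by (simp add: cofactor_def)
  qed
  finally show ?thesis .
qed

lemma det_mat0: "det (mat 0 0 f) = 1" by (simp add: det_def)

lemma res22_eq:
  fixes a0 a1 b0 b1 :: "'a::comm_ring_1"
  shows "res22 [:a0, a1, 1:] [:b0, b1:] = b0^2 - a1*b0*b1 + a0*b1^2"
  unfolding res22_def sylvester_mat_sub_def
  by (simp add: numeral_eq_Suc det_mat_expand det_mat0 lessThan_Suc power2_eq_square algebra_simps)

definition liftF :: "'a::field \<Rightarrow> 'a \<Rightarrow> 'a \<Rightarrow> 'a poly \<times> 'a poly" where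
  "liftF p r q = ([: -(p^2)/(p*q - r^2), -(p*r)/(p*q - r^2), 1:], [:r, q:])"

lemma eval_T_3: "eval_T t [:a, b, c:] = [:poly a t, poly b t, poly c t:]"
  unfolding eval_T_def by (simp add: map_poly_simps)
lemma eval_T_2: "eval_T t [:a, b:] = [:poly a t, poly b t:]"
  unfolding eval_T_def by (simp add: map_poly_simps)

lemma path_htpy:
  fixes P R Q :: "'a::field poly"
  assumes eq: "P*Q - R^2 = [:d:]" and d: "d \<noteq> 0"
  shows "naive_htpy (liftF (poly P 0) (poly R 0) (poly Q 0)) (liftF (poly P 1) (poly R 1) (poly Q 1))"
proof -
  define H where "H = [: smult (-1/d) (P^2), smult (-1/d) (P*R), 1 :]"
  define G where "G = [: R, Q :]"
  have deg: "degree H = 2" "coeff H 2 = 1" "degree G < 2"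
    unfolding H_def G_def by (auto simp: numeral_2_eq_2 degree_pCons_eq_if)
  have "res22 H G = R^2 - smult (-1/d) (P*R) * R * Q + smult (-1/d) (P^2) * Q^2"
    unfolding H_def G_def by (rule res22_eq)
  also have "\<dots> = R^2 - smult (1/d) (P*Q * (P*Q - R^2))"
    by (simp add: algebra_simps power2_eq_square smult_diff_right)
  also have "\<dots> = R^2 - P*Q"
    unfolding eq using d by (simp add: mult_smult_right[symmetric] flip: mult_smult_right)
  also have "\<dots> = [:-d:]" using eq by (simp add: algebra_simps)
  finally have res: "res22 H G = [:-d:]" .
  have unit: "res22 H G dvd 1" unfolding res using d by (simp add: is_unit_pCons_iff)
  have mem: "(H, G) \<in> F2 TYPE('a poly)" unfolding F2_def using deg unit by auto
  have ev: "(eval_T t H, eval_T t G) = liftF (poly P t) (poly R t) (poly Q t)" for t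
  proof -
    have dt: "poly P t * poly Q t - (poly R t)^2 = d"
      using arg_cong[OF eq, of "\<lambda>x. poly x t"] by (simp add: power2_eq_square)
    show ?thesis unfolding H_def G_def eval_T_3 eval_T_2 liftF_def dt
      by (simp add: power2_eq_square)
  qed
  show ?thesis unfolding naive_htpy_def using mem ev[of 0] ev[of 1] by metis
qed

lemma equiv_refl: "naive_htpy_equiv f f" unfolding naive_htpy_equiv_def by simp
lemma equiv_trans: "naive_htpy_equiv f g \<Longrightarrow> naive_htpy_equiv g h \<Longrightarrow> naive_htpy_equiv f h"
  unfolding naive_htpy_equiv_def by (rule rtranclp_trans)
lemma equiv_sym: "naive_htpy_equiv f g \<Longrightarrow> naive_htpy_equiv g f"
  unfolding naive_htpy_equiv_def
proof (induction rule: rtranclp_induct)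
  case base then show ?case by simp
next
  case (step y z)
  then have "(\<lambda>f g. naive_htpy f g \<or> naive_htpy g f) z y" by auto
  then have "(\<lambda>f g. naive_htpy f g \<or> naive_htpy g f)\<^sup>*\<^sup>* z y" by auto
  then show ?case using step(3) by (rule rtranclp_trans)
qed
lemma htpy_equiv: "naive_htpy f g \<Longrightarrow> naive_htpy_equiv f g"
  unfolding naive_htpy_equiv_def by auto

lemma path_equiv:
  fixes P R Q :: "'a::field poly"
  assumes eq: "P*Q - R^2 = [:d:]" and d: "d \<noteq> 0"
  shows "naive_htpy_equiv (liftF (poly P 0) (poly R 0) (poly Q 0)) (liftF (poly P 1) (poly R 1) (poly Q 1))"
  by (rule htpy_equiv, rule path_htpy[OF eq d])

lemma move_U:
  fixes p r q s :: "'a::field"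
  assumes "p*q - r^2 \<noteq> 0"
  shows "naive_htpy_equiv (liftF p r q) (liftF p (r + p*s) (q + 2*r*s + p*s^2))"
proof -
  have "[:p:] * [:q, 2*r*s, p*s^2:] - [:r, p*s:]^2 = [:p*q - r^2:]"
    by (simp add: power2_eq_square algebra_simps)
  from path_equiv[OF this assms] show ?thesis by (simp add: algebra_simps power2_eq_square)
qed

lemma move_L:
  fixes p r q s :: "'a::field"
  assumes "p*q - r^2 \<noteq> 0"
  shows "naive_htpy_equiv (liftF p r q) (liftF (p + 2*r*s + q*s^2) (r + q*s) q)"
proof -
  have "[:p, 2*r*s, q*s^2:] * [:q:] - [:r, q*s:]^2 = [:p*q - r^2:]"
    by (simp add: power2_eq_square algebra_simps)
  from path_equiv[OF this assms] show ?thesis by (simp add: algebra_simps power2_eq_square)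
qed

lemma move_Z:
  fixes r q :: "'a::field"
  assumes "r \<noteq> 0"
  shows "naive_htpy_equiv (liftF 0 r q) (liftF 0 r 0)"
proof -
  have "0 * [:q, -q:] - [:r:]^2 = [:0*q - r^2:]"
    by (simp add: power2_eq_square algebra_simps)
  from path_equiv[OF this] assms show ?thesis by simp
qed


lemma lift_to_f:
  fixes a0 a1 b0 b1 :: "'a::field"
  assumes res: "res22 [:a0,a1,1:] [:b0,b1:] \<noteq> 0"
  shows "naive_htpy_equiv ([:a0,a1,1:],[:b0,b1:]) (liftF (a1*b0 - a0*b1) b0 b1)"
proof -
  define p where "p = a1*b0 - a0*b1"
  define d where "d = p*b1 - b0^2"
  have dres: "d = - res22 [:a0,a1,1:] [:b0,b1:]" unfolding res22_eq d_def p_def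
    by (simp add: algebra_simps power2_eq_square)
  have d0: "d \<noteq> 0" using res dres by simp
  define \<alpha>0 where "\<alpha>0 = -(p^2)/d"
  define \<alpha>1 where "\<alpha>1 = -(p*b0)/d"
  have lift: "liftF p b0 b1 = ([:\<alpha>0, \<alpha>1, 1:], [:b0, b1:])"
    unfolding liftF_def \<alpha>0_def \<alpha>1_def d_def by simp
  define H where "H = [: [:\<alpha>0, a0 - \<alpha>0:], [:\<alpha>1, a1 - \<alpha>1:], 1 :]"
  define G :: "'a poly poly" where "G = [: [:b0:], [:b1:] :]"
  have deg: "degree H = 2" "coeff H 2 = 1" "degree G < 2"
    unfolding H_def G_def by (auto simp: numeral_2_eq_2 degree_pCons_eq_if)
  have k: "\<alpha>1*b0 - \<alpha>0*b1 = p"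
  proof -
    have 1: "\<alpha>1*b0 = -(p*b0*b0)/d" unfolding \<alpha>1_def by simp
    have 2: "\<alpha>0*b1 = -(p*p*b1)/d" unfolding \<alpha>0_def by (simp add: power2_eq_square)
    have "\<alpha>1*b0 - \<alpha>0*b1 = (p*(p*b1 - b0*b0))/d" unfolding 1 2 by (simp add: diff_divide_distrib right_diff_distrib mult.assoc)
    also have "p*b1 - b0*b0 = d" unfolding d_def by (simp add: power2_eq_square)
    finally show ?thesis using d0 by simp
  qed
  have c0: "b0^2 - \<alpha>1*b0*b1 + \<alpha>0*b1^2 = -d"
  proof -
    have "b0^2 - \<alpha>1*b0*b1 + \<alpha>0*b1^2 = b0^2 - b1*(\<alpha>1*b0 - \<alpha>0*b1)" by (simp add: algebra_simps power2_eq_square)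
    then show ?thesis unfolding k d_def by (simp add: algebra_simps)
  qed
  have c1: "- ((a1 - \<alpha>1)*b0*b1) + (a0 - \<alpha>0)*b1^2 = 0"
  proof -
    have "- ((a1 - \<alpha>1)*b0*b1) + (a0 - \<alpha>0)*b1^2 = -b1*(a1*b0 - a0*b1) + b1*(\<alpha>1*b0 - \<alpha>0*b1)"
      by (simp add: algebra_simps power2_eq_square)
    then show ?thesis unfolding k p_def by simp
  qed
  have "res22 H G = [:b0:]^2 - [:\<alpha>1, a1 - \<alpha>1:]*[:b0:]*[:b1:] + [:\<alpha>0, a0 - \<alpha>0:]*[:b1:]^2"
    unfolding H_def G_def by (rule res22_eq)
  also have "\<dots> = [: b0^2 - \<alpha>1*b0*b1 + \<alpha>0*b1^2, - ((a1 - \<alpha>1)*b0*b1) + (a0 - \<alpha>0)*b1^2 :]"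
    by (simp add: power2_eq_square algebra_simps)
  also have "\<dots> = [:-d:]" using c0 c1 by simp
  finally have res: "res22 H G = [:-d:]" .
  have "res22 H G dvd 1" unfolding res using d0 by (simp add: is_unit_pCons_iff)
  then have mem: "(H, G) \<in> F2 TYPE('a poly)" unfolding F2_def using deg by auto
  have h0: "eval_T 0 H = [:\<alpha>0, \<alpha>1, 1:]" unfolding H_def eval_T_3 by simp
  have g0: "eval_T t G = [:b0, b1:]" for t unfolding G_def eval_T_2 by simp
  have e0: "(eval_T 0 H, eval_T 0 G) = liftF p b0 b1" unfolding lift h0 g0 by simp
  have e1: "(eval_T 1 H, eval_T 1 G) = ([:a0,a1,1:],[:b0,b1:])" unfolding H_def g0 eval_T_3 by simp
  have "naive_htpy (liftF p b0 b1) ([:a0,a1,1:],[:b0,b1:])"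
    unfolding naive_htpy_def
    by (rule exI[of _ H], rule exI[of _ G]) (use mem e0 e1 in auto)
  then have "naive_htpy_equiv (liftF p b0 b1) ([:a0,a1,1:],[:b0,b1:])" by (rule htpy_equiv)
  then show ?thesis unfolding p_def by (rule equiv_sym)
qed


lemma move_U':
  fixes p r q s :: "'a::field"
  assumes "p*q - r^2 \<noteq> 0" "r' = r + p*s" "q' = q + 2*r*s + p*s^2"
  shows "naive_htpy_equiv (liftF p r q) (liftF p r' q')"
  using move_U[OF assms(1)] assms(2,3) by simp

lemma move_L':
  fixes p r q s :: "'a::field"
  assumes "p*q - r^2 \<noteq> 0" "p' = p + 2*r*s + q*s^2" "r' = r + q*s"
  shows "naive_htpy_equiv (liftF p r q) (liftF p' r' q)"
  using move_L[OF assms(1)] assms(2,3) by simp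

lemma reach11_x2:
  fixes p r q x1 x2 :: "'a::field"
  assumes d: "p*q - r^2 \<noteq> 0" and x2: "x2 \<noteq> 0"
  shows "\<exists>r' q'. naive_htpy_equiv (liftF p r q) (liftF (p*x1^2 + 2*r*x1*x2 + q*x2^2) r' q')
     \<and> (p*x1^2 + 2*r*x1*x2 + q*x2^2)*q' - r'^2 = p*q - r^2"
proof -
  define a where "a = (x1 - 1)/x2"
  have x1: "x1 = 1 + a*x2" unfolding a_def using x2 by simp
  define r1 where "r1 = r + p*a"
  define q1 where "q1 = q + 2*r*a + p*a^2"
  have s1: "naive_htpy_equiv (liftF p r q) (liftF p r1 q1)"
    by (rule move_U'[OF d]) (auto simp: r1_def q1_def)
  have d1: "p*q1 - r1^2 = p*q - r^2" unfolding r1_def q1_def by (simp add: algebra_simps power2_eq_square)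
  have s2: "naive_htpy_equiv (liftF p r1 q1) (liftF (p + 2*r1*x2 + q1*x2^2) (r1 + q1*x2) q1)"
    by (rule move_L'[OF _ refl refl]) (use d d1 in simp)
  have v: "p + 2*r1*x2 + q1*x2^2 = p*x1^2 + 2*r*x1*x2 + q*x2^2"
    unfolding x1 r1_def q1_def by (simp add: algebra_simps power2_eq_square)
  have d2: "(p + 2*r1*x2 + q1*x2^2)*q1 - (r1 + q1*x2)^2 = p*q - r^2"
    using d1 by (simp add: algebra_simps power2_eq_square)
  show ?thesis using equiv_trans[OF s1 s2] d2 unfolding v by blast
qed

lemma reach11:
  fixes p r q x1 x2 :: "'a::field"
  assumes d: "p*q - r^2 \<noteq> 0" and x: "x1 \<noteq> 0 \<or> x2 \<noteq> 0"
  shows "\<exists>r' q'. naive_htpy_equiv (liftF p r q) (liftF (p*x1^2 + 2*r*x1*x2 + q*x2^2) r' q')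
     \<and> (p*x1^2 + 2*r*x1*x2 + q*x2^2)*q' - r'^2 = p*q - r^2"
proof (cases "x2 = 0")
  case False then show ?thesis using reach11_x2[OF d] by blast
next
  case True
  then have x1: "x1 \<noteq> 0" using x by simp
  define p1 where "p1 = p + 2*r*1 + q*1^2"
  define r1 where "r1 = r + q*1"
  have s1: "naive_htpy_equiv (liftF p r q) (liftF p1 r1 q)"
    by (rule move_L'[OF d]) (auto simp: p1_def r1_def)
  have d1: "p1*q - r1^2 = p*q - r^2" unfolding p1_def r1_def by (simp add: algebra_simps power2_eq_square)
  have v: "p1*x1^2 + 2*r1*x1*(-x1) + q*(-x1)^2 = p*x1^2 + 2*r*x1*x2 + q*x2^2"
    unfolding p1_def r1_def True by (simp add: algebra_simps power2_eq_square)
  from reach11_x2[of p1 q r1 "-x1" x1] d d1 x1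
  obtain r' q' where "naive_htpy_equiv (liftF p1 r1 q) (liftF (p1*x1^2 + 2*r1*x1*(-x1) + q*(-x1)^2) r' q')"
     "(p1*x1^2 + 2*r1*x1*(-x1) + q*(-x1)^2)*q' - r'^2 = p1*q - r1^2" by auto
  then show ?thesis using equiv_trans[OF s1] d1 unfolding v by metis
qed

lemma canon_aniso:
  fixes p r q x1 x2 :: "'a::field"
  assumes d: "p*q - r^2 \<noteq> 0" and x: "x1 \<noteq> 0 \<or> x2 \<noteq> 0"
    and c: "p*x1^2 + 2*r*x1*x2 + q*x2^2 = c" "c \<noteq> 0"
  shows "naive_htpy_equiv (liftF p r q) (liftF c 0 ((p*q - r^2)/c))"
proof -
  from reach11[OF d x] c obtain r' q' where s1: "naive_htpy_equiv (liftF p r q) (liftF c r' q')"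
    and d1: "c*q' - r'^2 = p*q - r^2" by auto
  have s2: "naive_htpy_equiv (liftF c r' q') (liftF c (r' + c*(-r'/c)) (q' + 2*r'*(-r'/c) + c*(-r'/c)^2))"
    by (rule move_U) (use d d1 in simp)
  have e1: "r' + c*(-r'/c) = 0" using c by simp
  have e2: "q' + 2*r'*(-r'/c) + c*(-r'/c)^2 = (p*q - r^2)/c"
    unfolding d1[symmetric] using c by (simp add: field_simps power2_eq_square)
  show ?thesis using equiv_trans[OF s1 s2] unfolding e1 e2 .
qed

lemma iso_square:
  fixes p r q x1 x2 :: "'a::field"
  assumes x: "x1 \<noteq> 0 \<or> x2 \<noteq> 0" and v: "p*x1^2 + 2*r*x1*x2 + q*x2^2 = 0"
  shows "\<exists>e. e^2 = -(p*q - r^2)"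
proof (cases "x2 = 0")
  case True
  then have "p = 0" using x v by simp
  then show ?thesis by (intro exI[of _ r]) simp
next
  case False
  have "(p*x1 + r*x2)^2 = p*(p*x1^2 + 2*r*x1*x2) + r^2*x2^2" by (simp add: algebra_simps power2_eq_square)
  also have "p*x1^2 + 2*r*x1*x2 = (p*x1^2 + 2*r*x1*x2 + q*x2^2) - q*x2^2" by simp
  also have "\<dots> = - q*x2^2" using v by simp
  finally have "(p*x1 + r*x2)^2 = -(p*q - r^2)*x2^2" by (simp add: algebra_simps power2_eq_square)
  then have "((p*x1 + r*x2)/x2)^2 = -(p*q - r^2)" using False by (simp add: power_divide)
  then show ?thesis by blast
qed

lemma canon_iso:
  fixes p r q e :: "'a::field"
  assumes d: "p*q - r^2 \<noteq> 0" and e: "e^2 = -(p*q - r^2)"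
  shows "naive_htpy_equiv (liftF p r q) (liftF 0 e 0)"
proof -
  have "\<exists>r' q'. naive_htpy_equiv (liftF p r q) (liftF 0 r' q') \<and> 0*q' - r'^2 = p*q - r^2"
  proof (cases "p = 0")
    case True then show ?thesis using equiv_refl by blast
  next
    case False
    have v: "p*((e-r)/p)^2 + 2*r*((e-r)/p)*1 + q*1^2 = 0"
    proof -
      have "p*((e-r)/p)^2 + 2*r*((e-r)/p)*1 + q*1^2 = ((e-r)^2 + 2*r*(e-r) + p*q)/p"
        using False by (simp add: field_simps power2_eq_square)
      also have "(e-r)^2 + 2*r*(e-r) + p*q = e^2 - r^2 + p*q" by (simp add: algebra_simps power2_eq_square)
      finally show ?thesis using e by simp
    qed
    have x: "(e-r)/p \<noteq> 0 \<or> (1::'a) \<noteq> 0" by simp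
    from reach11[OF d x] show ?thesis unfolding v by simp
  qed
  then obtain r' q' where s1: "naive_htpy_equiv (liftF p r q) (liftF 0 r' q')" and d1: "0*q' - r'^2 = p*q - r^2" by blast
  have r': "r' \<noteq> 0" using d d1 by auto
  have s2: "naive_htpy_equiv (liftF 0 r' q') (liftF 0 r' 0)" by (rule move_Z[OF r'])
  have "r'^2 = e^2" using d1 e by (simp add: algebra_simps)
  then have "r' = e \<or> r' = -e" by (simp add: power2_eq_iff)
  then have s3: "naive_htpy_equiv (liftF 0 r' 0) (liftF 0 e 0)"
  proof
    assume "r' = e" then show ?thesis using equiv_refl by simp
  next
    assume re: "r' = -e"
    have e0: "e \<noteq> 0" using r' re by simp
    have a: "naive_htpy_equiv (liftF 0 (-e) 0) (liftF 0 (-e) (2*e))"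
      by (rule move_U'[where s="-1"]) (use e0 in auto)
    have b: "naive_htpy_equiv (liftF 0 (-e) (2*e)) (liftF 0 e (2*e))"
      by (rule move_L'[where s=1]) (use e0 in auto)
    have c: "naive_htpy_equiv (liftF 0 e (2*e)) (liftF 0 e 0)"
      by (rule move_U'[where s="-1"]) (use e0 in auto)
    show ?thesis unfolding re using equiv_trans[OF equiv_trans[OF a b] c] by simp
  qed
  show ?thesis by (rule equiv_trans[OF s1 equiv_trans[OF s2 s3]])
qed



definition Jm :: "nat \<Rightarrow> nat \<Rightarrow> 'a::zero_neq_one mat" where
  "Jm n r = mat n n (\<lambda>(i,j). if i = j \<and> i < r then 1 else 0)"

lemma zero_mat_mult_vec[simp]: "c \<in> carrier_vec m \<Longrightarrow> 0\<^sub>m n m *\<^sub>v c = (0\<^sub>v n :: 'a::comm_ring_1 vec)"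
  by (rule eq_vecI) (auto simp: scalar_prod_def)

lemma mat_mult_zero_vec[simp]: "A \<in> carrier_mat nr n \<Longrightarrow> A *\<^sub>v 0\<^sub>v n = (0\<^sub>v nr :: 'a::comm_ring_1 vec)"
  by (rule eq_vecI) (auto simp: scalar_prod_def)

lemma mat_mult_uminus_vec: "A \<in> carrier_mat nr n \<Longrightarrow> v \<in> carrier_vec n \<Longrightarrow> A *\<^sub>v (- v) = - (A *\<^sub>v (v :: 'a::comm_ring_1 vec))"
  by (rule eq_vecI) (auto simp: scalar_prod_def sum_negf)

lemma elim_block:
  fixes A12 A21 A22 :: "'a::field mat"
  assumes A12: "A12 \<in> carrier_mat 1 n" and A21: "A21 \<in> carrier_mat n 1" and A22: "A22 \<in> carrier_mat n n"
  shows "four_block_mat (1\<^sub>m 1) (0\<^sub>m 1 n) (- A21) (1\<^sub>m n) * four_block_mat (1\<^sub>m 1) A12 A21 A22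
         * four_block_mat (1\<^sub>m 1) (- A12) (0\<^sub>m n 1) (1\<^sub>m n)
       = four_block_mat (1\<^sub>m 1) (0\<^sub>m 1 n) (0\<^sub>m n 1) (A22 - A21 * A12)"
proof -
  have "four_block_mat (1\<^sub>m 1) (0\<^sub>m 1 n) (- A21) (1\<^sub>m n) * four_block_mat (1\<^sub>m 1) A12 A21 A22
     = four_block_mat (1\<^sub>m 1 * 1\<^sub>m 1 + 0\<^sub>m 1 n * A21) (1\<^sub>m 1 * A12 + 0\<^sub>m 1 n * A22)
         (- A21 * 1\<^sub>m 1 + 1\<^sub>m n * A21) (- A21 * A12 + 1\<^sub>m n * A22)"
    by (rule mult_four_block_mat) (use A12 A21 A22 in auto)
  also have "\<dots> = four_block_mat (1\<^sub>m 1) A12 (0\<^sub>m n 1) (A22 - A21 * A12)"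
  proof (rule cong_four_block_mat)
    show "1\<^sub>m 1 * 1\<^sub>m 1 + 0\<^sub>m 1 n * A21 = (1\<^sub>m 1 :: 'a mat)" using A21 by simp
    show "1\<^sub>m 1 * A12 + 0\<^sub>m 1 n * A22 = A12" using A12 A22 by simp
    show "- A21 * 1\<^sub>m 1 + 1\<^sub>m n * A21 = 0\<^sub>m n 1" using A21 by simp
    show "- A21 * A12 + 1\<^sub>m n * A22 = A22 - A21 * A12" using A12 A21 A22
      by (simp add: comm_add_mat[of _ n n] add_uminus_minus_mat[of _ n n])
  qed
  also have "\<dots> * four_block_mat (1\<^sub>m 1) (- A12) (0\<^sub>m n 1) (1\<^sub>m n)
     = four_block_mat (1\<^sub>m 1 * 1\<^sub>m 1 + A12 * 0\<^sub>m n 1) (1\<^sub>m 1 * (- A12) + A12 * 1\<^sub>m n)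
         (0\<^sub>m n 1 * 1\<^sub>m 1 + (A22 - A21 * A12) * 0\<^sub>m n 1) (0\<^sub>m n 1 * (- A12) + (A22 - A21 * A12) * 1\<^sub>m n)"
    by (rule mult_four_block_mat) (use A12 A21 A22 in auto)
  also have "\<dots> = four_block_mat (1\<^sub>m 1) (0\<^sub>m 1 n) (0\<^sub>m n 1) (A22 - A21 * A12)"
  proof (rule cong_four_block_mat)
    show "1\<^sub>m 1 * 1\<^sub>m 1 + A12 * 0\<^sub>m n 1 = (1\<^sub>m 1 :: 'a mat)" using A12 by simp
    show "1\<^sub>m 1 * (- A12) + A12 * 1\<^sub>m n = 0\<^sub>m 1 n" using A12 by simp
    show "0\<^sub>m n 1 * 1\<^sub>m 1 + (A22 - A21 * A12) * 0\<^sub>m n 1 = (0\<^sub>m n 1 :: 'a mat)" using A12 A21 A22 by simp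
    show "0\<^sub>m n 1 * (- A12) + (A22 - A21 * A12) * 1\<^sub>m n = A22 - A21 * A12"
      by (rule eq_matI) (use A12 A21 A22 in auto)
  qed
  finally show ?thesis .
qed


lemma det_swaprows_nz: "k < n \<Longrightarrow> l < n \<Longrightarrow> det (swaprows_mat n k l :: 'a::field mat) \<noteq> 0"
proof (cases "k = l")
  case True
  assume "k < n"
  have "swaprows_mat n k l = (1\<^sub>m n :: 'a mat)" by (rule eq_matI) (use True in auto)
  then show ?thesis by simp
next
  case False
  assume "k < n" "l < n"
  then have "det (swaprows_mat n k l :: 'a mat) = - 1" using det_swaprows_mat[OF _ _ False] by blast
  then show ?thesis by simp
qed

lemma transpose_swaprows_mat: "transpose_mat (swaprows_mat n k l) = (swaprows_mat n k l :: 'a::semiring_1 mat)"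
  by (rule eq_matI) auto

lemma swap_entry:
  fixes A :: "'a::field mat"
  assumes A: "A \<in> carrier_mat n n" and i0: "i0 < n" and j0: "j0 < n"
  shows "(swaprows_mat n 0 i0 * A * swaprows_mat n 0 j0) $$ (0,0) = A $$ (i0, j0)"
proof -
  have n: "0 < n" using i0 by simp
  define B where "B = swaprows_mat n 0 i0 * A"
  have B: "B \<in> carrier_mat n n" unfolding B_def using A by auto
  have Bi: "B $$ (0, j) = A $$ (i0, j)" if "j < n" for j
    unfolding B_def swaprows_mat[OF A n i0, symmetric] using that A n i0 by simp
  have "B * swaprows_mat n 0 j0 = transpose_mat (swaprows_mat n 0 j0 * transpose_mat B)"
    using transpose_mult[of "swaprows_mat n 0 j0" n n "transpose_mat B" n] B
    by (simp add: transpose_swaprows_mat)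
  also have "swaprows_mat n 0 j0 * transpose_mat B = swaprows 0 j0 (transpose_mat B)"
    using swaprows_mat[of "transpose_mat B" n n 0 j0] B n j0 by simp
  finally have "(B * swaprows_mat n 0 j0) $$ (0,0) = (swaprows 0 j0 (transpose_mat B)) $$ (0,0)"
    using B n by simp
  also have "\<dots> = B $$ (0, j0)" using B n j0 by simp
  finally show ?thesis unfolding B_def[symmetric] using Bi[OF j0] by simp
qed

lemma Jm_Suc: "Jm (Suc n) (Suc r) = four_block_mat (1\<^sub>m 1) (0\<^sub>m 1 n) (0\<^sub>m n 1) (Jm n r :: 'a::zero_neq_one mat)"
  by (rule eq_matI) (auto simp: Jm_def)

lemma normal_form:
  fixes A :: "'a::field mat"
  assumes "A \<in> carrier_mat n n"
  shows "\<exists>U V r. U \<in> carrier_mat n n \<and> V \<in> carrier_mat n n \<and> det U \<noteq> 0 \<and> det V \<noteq> 0 \<and> r \<le> n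
     \<and> U * A * V = Jm n r"
  using assms
proof (induction n arbitrary: A)
  case 0
  then show ?case
    by (intro exI[of _ "1\<^sub>m 0"] exI[of _ 0]) (auto intro!: eq_matI simp: Jm_def)
next
  case (Suc n)
  note A = Suc.prems
  show ?case
  proof (cases "\<forall>i<Suc n. \<forall>j<Suc n. A $$ (i,j) = 0")
    case True
    have "A = Jm (Suc n) 0" by (rule eq_matI) (use A True in \<open>auto simp: Jm_def\<close>)
    then show ?thesis using A by (intro exI[of _ "1\<^sub>m (Suc n)"] exI[of _ 0]) auto
  next
    case False
    then obtain i0 j0 where i0: "i0 < Suc n" and j0: "j0 < Suc n" and a: "A $$ (i0,j0) \<noteq> 0" by blast
    define a where "a = A $$ (i0,j0)"
    define S1 :: "'a mat" where "S1 = swaprows_mat (Suc n) 0 i0"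
    define S2 :: "'a mat" where "S2 = swaprows_mat (Suc n) 0 j0"
    define Mr :: "'a mat" where "Mr = multrow_mat (Suc n) 0 (1/a)"
    define A1 where "A1 = S1 * A * S2"
    define A2 where "A2 = Mr * A1"
    have S1: "S1 \<in> carrier_mat (Suc n) (Suc n)" and S2: "S2 \<in> carrier_mat (Suc n) (Suc n)"
      and Mr: "Mr \<in> carrier_mat (Suc n) (Suc n)" unfolding S1_def S2_def Mr_def by auto
    have A1: "A1 \<in> carrier_mat (Suc n) (Suc n)" unfolding A1_def using S1 S2 A by auto
    have A2: "A2 \<in> carrier_mat (1 + n) (1 + n)" unfolding A2_def using Mr A1 by auto
    have a1: "A1 $$ (0,0) = a" unfolding A1_def S1_def S2_def a_def by (rule swap_entry[OF A i0 j0])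
    have a2: "A2 $$ (0,0) = 1"
      unfolding A2_def Mr_def multrow_mat[OF A1, symmetric] using A1 a1 a a_def by simp
    have dS1: "det S1 \<noteq> 0" unfolding S1_def by (rule det_swaprows_nz) (use i0 in auto)
    have dS2: "det S2 \<noteq> 0" unfolding S2_def by (rule det_swaprows_nz) (use j0 in auto)
    have dMr: "det Mr \<noteq> 0" unfolding Mr_def using det_multrow_mat[of 0 "Suc n" "1/a"] a a_def by simp
    obtain A11 A12 A21 A22 where sb: "split_block A2 1 1 = (A11, A12, A21, A22)" by (metis prod_cases4)
    note spl = split_block[OF sb, of n n]
    have A11: "A11 \<in> carrier_mat 1 1" and A12: "A12 \<in> carrier_mat 1 n" and A21: "A21 \<in> carrier_mat n 1"
      and A22: "A22 \<in> carrier_mat n n" and A2b: "A2 = four_block_mat A11 A12 A21 A22" using spl A2 by auto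
    have A11e: "A11 = 1\<^sub>m 1"
      using sb a2 unfolding split_block_def Let_def by (auto intro!: eq_matI)
    define B where "B = A22 - A21 * A12"
    have B: "B \<in> carrier_mat n n" unfolding B_def using A12 A21 A22 by auto
    from Suc.IH[OF B] obtain U' V' r where U': "U' \<in> carrier_mat n n" and V': "V' \<in> carrier_mat n n"
      and dU': "det U' \<noteq> 0" and dV': "det V' \<noteq> 0" and r: "r \<le> n" and UBV: "U' * B * V' = Jm n r" by blast
    define L :: "'a mat" where "L = four_block_mat (1\<^sub>m 1) (0\<^sub>m 1 n) (- A21) (1\<^sub>m n)"
    define R :: "'a mat" where "R = four_block_mat (1\<^sub>m 1) (- A12) (0\<^sub>m n 1) (1\<^sub>m n)"
    define D1 :: "'a mat" where "D1 = four_block_mat (1\<^sub>m 1) (0\<^sub>m 1 n) (0\<^sub>m n 1) U'"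
    define D2 :: "'a mat" where "D2 = four_block_mat (1\<^sub>m 1) (0\<^sub>m 1 n) (0\<^sub>m n 1) V'"
    have L: "L \<in> carrier_mat (Suc n) (Suc n)" unfolding L_def using A21 by auto
    have R: "R \<in> carrier_mat (Suc n) (Suc n)" unfolding R_def using A12 by auto
    have D1: "D1 \<in> carrier_mat (Suc n) (Suc n)" unfolding D1_def using U' by auto
    have D2: "D2 \<in> carrier_mat (Suc n) (Suc n)" unfolding D2_def using V' by auto
    have dL: "det L = 1" unfolding L_def
      by (subst det_four_block_mat_upper_right_zero[of _ 1 _ n]) (use A21 in auto)
    have dR: "det R = 1" unfolding R_def
      by (subst det_four_block_mat_lower_left_zero[of _ 1 _ n]) (use A12 in auto)
    have dD1: "det D1 = det U'" unfolding D1_def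
      by (subst det_four_block_mat_upper_right_zero[of _ 1 _ n]) (use U' in auto)
    have dD2: "det D2 = det V'" unfolding D2_def
      by (subst det_four_block_mat_upper_right_zero[of _ 1 _ n]) (use V' in auto)
    have LAR: "L * A2 * R = four_block_mat (1\<^sub>m 1) (0\<^sub>m 1 n) (0\<^sub>m n 1) B"
      unfolding L_def R_def B_def A2b A11e by (rule elim_block[OF A12 A21 A22])
    have DBD: "D1 * four_block_mat (1\<^sub>m 1) (0\<^sub>m 1 n) (0\<^sub>m n 1) B * D2 = Jm (Suc n) (Suc r)"
    proof -
      have "D1 * four_block_mat (1\<^sub>m 1) (0\<^sub>m 1 n) (0\<^sub>m n 1) B
          = four_block_mat (1\<^sub>m 1 * 1\<^sub>m 1 + 0\<^sub>m 1 n * 0\<^sub>m n 1) (1\<^sub>m 1 * 0\<^sub>m 1 n + 0\<^sub>m 1 n * B)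
              (0\<^sub>m n 1 * 1\<^sub>m 1 + U' * 0\<^sub>m n 1) (0\<^sub>m n 1 * 0\<^sub>m 1 n + U' * B)"
        unfolding D1_def by (rule mult_four_block_mat) (use U' B in auto)
      also have "\<dots> = four_block_mat (1\<^sub>m 1) (0\<^sub>m 1 n) (0\<^sub>m n 1) (U' * B)"
        by (rule cong_four_block_mat) (use U' B in auto)
      also have "\<dots> * D2 = four_block_mat (1\<^sub>m 1 * 1\<^sub>m 1 + 0\<^sub>m 1 n * 0\<^sub>m n 1) (1\<^sub>m 1 * 0\<^sub>m 1 n + 0\<^sub>m 1 n * V')
              (0\<^sub>m n 1 * 1\<^sub>m 1 + (U' * B) * 0\<^sub>m n 1) (0\<^sub>m n 1 * 0\<^sub>m 1 n + (U' * B) * V')"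
        unfolding D2_def by (rule mult_four_block_mat) (use U' B V' in auto)
      also have "\<dots> = four_block_mat (1\<^sub>m 1) (0\<^sub>m 1 n) (0\<^sub>m n 1) (U' * B * V')"
        by (rule cong_four_block_mat) (use U' B V' in auto)
      finally show ?thesis unfolding UBV Jm_Suc .
    qed
    define U where "U = D1 * L * Mr * S1"
    define V where "V = S2 * R * D2"
    have U: "U \<in> carrier_mat (Suc n) (Suc n)" unfolding U_def using D1 L Mr S1 by auto
    have V: "V \<in> carrier_mat (Suc n) (Suc n)" unfolding V_def using D2 R S2 by auto
    have dU: "det U \<noteq> 0" unfolding U_def using D1 L Mr S1 dD1 dU' dL dMr dS1
      by (simp add: det_mult[of _ "Suc n"])
    have dV: "det V \<noteq> 0" unfolding V_def using D2 R S2 dD2 dV' dR dS2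
      by (simp add: det_mult[of _ "Suc n"])
    have "U * A * V = D1 * (L * (Mr * (S1 * A * S2)) * R) * D2"
      unfolding U_def V_def using D1 L Mr S1 S2 R D2 A
      by (simp add: assoc_mult_mat[of _ "Suc n" "Suc n" _ "Suc n" _ "Suc n"])
    also have "L * (Mr * (S1 * A * S2)) * R = L * A2 * R" unfolding A2_def A1_def ..
    finally have "U * A * V = Jm (Suc n) (Suc r)" unfolding LAR DBD .
    then show ?thesis using U V dU dV r by (intro exI[of _ U] exI[of _ V] exI[of _ "Suc r"]) auto
  qed
qed


lemma inv_exists:
  fixes A :: "'a::field mat"
  assumes A: "A \<in> carrier_mat n n" and dA: "det A \<noteq> 0"
  shows "\<exists>B. B \<in> carrier_mat n n \<and> A * B = 1\<^sub>m n \<and> B * A = 1\<^sub>m n"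
proof -
  from det_non_zero_imp_unit[OF A dA, unfolded Units_def, of "()"]
  show ?thesis by (auto simp: ring_mat_def)
qed

lemma mat_vec_zero_iff_unit:
  fixes A :: "'a::field mat"
  assumes A: "A \<in> carrier_mat n n" and dA: "det A \<noteq> 0" and v: "v \<in> carrier_vec n" and Av: "A *\<^sub>v v = 0\<^sub>v n"
  shows "v = 0\<^sub>v n"
  using det_0_iff_vec_prod_zero_field[OF A] dA v Av by blast

lemma LA:
  fixes A C :: "'a::field mat" and y :: "'a vec"
  assumes A: "A \<in> carrier_mat m m" and C: "C \<in> carrier_mat m m" and dC: "det C \<noteq> 0"
    and y: "y \<in> carrier_vec m"
    and b: "\<And>c. c \<in> carrier_vec m \<Longrightarrow> A *\<^sub>v c = 0\<^sub>v m \<Longrightarrow>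
              transpose_mat A *\<^sub>v (C *\<^sub>v c) = 0\<^sub>v m \<and> y \<bullet> (C *\<^sub>v c) = 0"
  shows "\<exists>c \<in> carrier_vec m. y = A *\<^sub>v c"
proof -
  from normal_form[OF A] obtain U V r where U: "U \<in> carrier_mat m m" and V: "V \<in> carrier_mat m m"
    and dU: "det U \<noteq> 0" and dV: "det V \<noteq> 0" and rm: "r \<le> m" and UAV: "U * A * V = Jm m r" by blast
  define J :: "'a mat" where "J = Jm m r"
  have J: "J \<in> carrier_mat m m" unfolding J_def Jm_def by auto
  have JT: "transpose_mat J = J" unfolding J_def Jm_def by (rule eq_matI) auto
  from inv_exists[OF U dU] obtain Ui where Ui: "Ui \<in> carrier_mat m m" and UUi: "U * Ui = 1\<^sub>m m" and UiU: "Ui * U = 1\<^sub>m m" by blast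
  from inv_exists[OF V dV] obtain Vi where Vi: "Vi \<in> carrier_mat m m" and VVi: "V * Vi = 1\<^sub>m m" and ViV: "Vi * V = 1\<^sub>m m" by blast
  have AJ: "A = Ui * J * Vi"
  proof -
    have "Ui * J * Vi = Ui * (U * A * V) * Vi" unfolding J_def UAV ..
    also have "\<dots> = (Ui * U) * A * (V * Vi)" using U A V Ui Vi
      by (simp add: assoc_mult_mat[of _ m m _ m _ m])
    finally show ?thesis using UiU VVi A by simp
  qed
  define G where "G = transpose_mat Ui * C * V"
  have G: "G \<in> carrier_mat m m" unfolding G_def using Ui C V by auto
  have dUi: "det Ui \<noteq> 0" using det_mult[OF Ui U] UiU by auto
  have dG: "det G \<noteq> 0" unfolding G_def using Ui C V dUi dC dV
    by (simp add: det_mult[of _ m] det_transpose)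
  define z where "z = U *\<^sub>v y"
  have z: "z \<in> carrier_vec m" unfolding z_def using U y by auto
  have yz: "y = Ui *\<^sub>v z" unfolding z_def using Ui U y UiU by (simp add: assoc_mult_mat_vec[symmetric, of _ m m _ m])
  define K :: "'a vec set" where "K = {k \<in> carrier_vec m. \<forall>i<r. k $ i = 0}"
  have Jk: "J *\<^sub>v k = 0\<^sub>v m" if "k \<in> K" for k
    using that unfolding K_def J_def Jm_def
    by (intro eq_vecI) (auto simp: scalar_prod_def intro!: sum.neutral)
  have props: "J *\<^sub>v (G *\<^sub>v k) = 0\<^sub>v m \<and> z \<bullet> (G *\<^sub>v k) = 0" if k: "k \<in> K" for k
  proof -
    have kc: "k \<in> carrier_vec m" using k unfolding K_def by auto
    have "A *\<^sub>v (V *\<^sub>v k) = Ui *\<^sub>v (J *\<^sub>v ((Vi * V) *\<^sub>v k))"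
      unfolding AJ using Ui J Vi V kc by (simp add: assoc_mult_mat_vec[of _ m m _ m])
    also have "\<dots> = 0\<^sub>v m" unfolding ViV using kc Jk[OF k] Ui by simp
    finally have "A *\<^sub>v (V *\<^sub>v k) = 0\<^sub>v m" .
    from b[OF _ this] V kc have b1: "transpose_mat A *\<^sub>v (C *\<^sub>v (V *\<^sub>v k)) = 0\<^sub>v m"
      and b2: "y \<bullet> (C *\<^sub>v (V *\<^sub>v k)) = 0" by auto
    have AT: "transpose_mat A = transpose_mat Vi * J * transpose_mat Ui"
    proof -
      have "transpose_mat A = transpose_mat Vi * transpose_mat (Ui * J)" unfolding AJ
        by (rule transpose_mult) (use Ui J Vi in auto)
      also have "transpose_mat (Ui * J) = transpose_mat J * transpose_mat Ui"
        by (rule transpose_mult) (use Ui J in auto)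
      finally show ?thesis unfolding JT using Ui J Vi by (simp add: assoc_mult_mat[of _ m m _ m _ m])
    qed
    have "J *\<^sub>v (G *\<^sub>v k) = (transpose_mat V * transpose_mat Vi) *\<^sub>v (J *\<^sub>v (G *\<^sub>v k))"
    proof -
      have "transpose_mat V * transpose_mat Vi = 1\<^sub>m m"
        using transpose_mult[OF Vi V] ViV by simp
      then show ?thesis using J G kc by simp
    qed
    also have "\<dots> = transpose_mat V *\<^sub>v (transpose_mat A *\<^sub>v (C *\<^sub>v (V *\<^sub>v k)))"
      unfolding AT G_def using V Vi J Ui C kc
      by (simp add: assoc_mult_mat_vec[of _ m m _ m] assoc_mult_mat[of _ m m _ m _ m])
    also have "\<dots> = 0\<^sub>v m" unfolding b1 using V by simp
    finally have t1: "J *\<^sub>v (G *\<^sub>v k) = 0\<^sub>v m" .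
    have "z \<bullet> (G *\<^sub>v k) = z \<bullet> (transpose_mat Ui *\<^sub>v (C *\<^sub>v (V *\<^sub>v k)))"
      unfolding G_def using Ui C V kc by (simp add: assoc_mult_mat_vec[of _ m m _ m])
    also have "\<dots> = (transpose_mat (transpose_mat Ui) *\<^sub>v z) \<bullet> (C *\<^sub>v (V *\<^sub>v k))"
      by (rule transpose_vec_mult_scalar[symmetric]) (use Ui C V kc z in auto)
    also have "\<dots> = 0" using b2 yz by simp
    finally show ?thesis using t1 by simp
  qed
  have G12: "G $$ (i, j) = 0" if i: "i < r" and j: "r \<le> j" "j < m" for i j
  proof -
    have uk: "unit_vec m j \<in> K" unfolding K_def using j by auto
    have "(J *\<^sub>v (G *\<^sub>v unit_vec m j)) $ i = 0" using props[OF uk] i rm by simp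
    moreover have "(J *\<^sub>v (G *\<^sub>v unit_vec m j)) $ i = (G *\<^sub>v unit_vec m j) $ i"
    proof -
      have "(J *\<^sub>v w) $ i = w $ i" if w: "w \<in> carrier_vec m" for w
      proof -
        have "(J *\<^sub>v w) $ i = (\<Sum>l = 0..<m. (if i = l then 1 else 0) * w $ l)"
          unfolding J_def Jm_def using i rm w by (simp add: scalar_prod_def)
        also have "\<dots> = w $ i" using i rm by (subst sum.remove[of _ i]) (auto intro!: sum.neutral)
        finally show ?thesis .
      qed
      then show ?thesis using G j by simp
    qed
    ultimately show ?thesis using G i j rm by simp
  qed
  obtain G11 G1 G21 G22 where sb: "split_block G r r = (G11, G1, G21, G22)" by (metis prod_cases4)
  have mr: "m = r + (m - r)" using rm by simp
  note spl = split_block[OF sb, of "m - r" "m - r"]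
  have G11: "G11 \<in> carrier_mat r r" and G1c: "G1 \<in> carrier_mat r (m-r)" and G21: "G21 \<in> carrier_mat (m-r) r"
    and G22: "G22 \<in> carrier_mat (m-r) (m-r)" and Gb: "G = four_block_mat G11 G1 G21 G22"
    using spl G rm by auto
  have G1: "G1 = 0\<^sub>m r (m - r)"
    using sb G12 G rm unfolding split_block_def Let_def by (auto intro!: eq_matI)
  have "det G = det G11 * det G22"
    unfolding Gb by (rule det_four_block_mat_upper_right_zero[OF G11 G1 G21 G22])
  then have dG22: "det (transpose_mat G22) \<noteq> 0" using dG G22 by (simp add: det_transpose)
  define z2 where "z2 = vec_last z (m - r)"
  define z1 where "z1 = vec_first z r"
  have z12: "z = z1 @\<^sub>v z2" unfolding z1_def z2_def using z mr
    by (metis vec_first_last_append)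
  have z2c: "z2 \<in> carrier_vec (m - r)" unfolding z2_def by simp
  have z1c: "z1 \<in> carrier_vec r" unfolding z1_def by simp
  have z2p: "z2 \<bullet> (G22 *\<^sub>v k2) = 0" if k2: "k2 \<in> carrier_vec (m - r)" for k2
  proof -
    have "0\<^sub>v r @\<^sub>v k2 \<in> carrier_vec (r + (m - r))" using k2 by (intro append_carrier_vec) auto
    then have "0\<^sub>v r @\<^sub>v k2 \<in> carrier_vec m" using rm by simp
    then have kK: "0\<^sub>v r @\<^sub>v k2 \<in> K" unfolding K_def using k2 rm by auto
    have "G *\<^sub>v (0\<^sub>v r @\<^sub>v k2) = (G11 *\<^sub>v 0\<^sub>v r + G1 *\<^sub>v k2) @\<^sub>v (G21 *\<^sub>v 0\<^sub>v r + G22 *\<^sub>v k2)"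
      unfolding Gb by (rule four_block_mat_mult_vec[OF G11 G1c G21 G22 _ k2]) simp
    also have "\<dots> = 0\<^sub>v r @\<^sub>v (G22 *\<^sub>v k2)" unfolding G1 using G11 G21 G22 k2
      by (subst eq_vecI[of "G11 *\<^sub>v 0\<^sub>v r + 0\<^sub>m r (m - r) *\<^sub>v k2" "0\<^sub>v r"]) (auto simp: scalar_prod_def)
    finally have "z \<bullet> (G *\<^sub>v (0\<^sub>v r @\<^sub>v k2)) = (z1 @\<^sub>v z2) \<bullet> (0\<^sub>v r @\<^sub>v (G22 *\<^sub>v k2))"
      unfolding z12 by simp
    also have "\<dots> = z1 \<bullet> 0\<^sub>v r + z2 \<bullet> (G22 *\<^sub>v k2)"
      by (rule scalar_prod_append) (use z1c z2c G22 k2 in auto)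
    finally show ?thesis using props[OF kK] z1c by simp
  qed
  have "transpose_mat G22 *\<^sub>v z2 = 0\<^sub>v (m - r)"
  proof (rule eq_vecI)
    fix i assume "i < dim_vec (0\<^sub>v (m - r) :: 'a vec)"
    then have i: "i < m - r" by simp
    have "(transpose_mat G22 *\<^sub>v z2) \<bullet> unit_vec (m-r) i = z2 \<bullet> (G22 *\<^sub>v unit_vec (m-r) i)"
      by (rule transpose_vec_mult_scalar[OF G22]) (use z2c i in auto)
    also have "\<dots> = 0" by (rule z2p) (use i in simp)
    finally show "(transpose_mat G22 *\<^sub>v z2) $ i = 0\<^sub>v (m - r) $ i"
      using i G22 z2c by (simp add: scalar_prod_right_unit)
  qed (use G22 in simp)
  then have z20: "z2 = 0\<^sub>v (m - r)"
    by (intro mat_vec_zero_iff_unit[OF _ dG22 z2c]) (use G22 in auto)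
  have Jz: "J *\<^sub>v z = z"
  proof (rule eq_vecI)
    fix i assume "i < dim_vec z"
    then have i: "i < m" using z by simp
    have "(J *\<^sub>v z) $ i = (\<Sum>l = 0..<m. (if i = l \<and> i < r then 1 else 0) * z $ l)"
      unfolding J_def Jm_def using i z by (simp add: scalar_prod_def)
    also have "\<dots> = (if i < r then z $ i else 0)" using i by (subst sum.remove[of _ i]) (auto intro!: sum.neutral)
    also have "\<dots> = z $ i"
    proof (cases "i < r")
      case False
      then have "z $ i = z2 $ (i - r)" unfolding z2_def vec_last_def using i z rm by simp
      also have "\<dots> = 0" unfolding z20 using i False by simp
      finally show ?thesis using False by simp
    qed simp
    finally show "(J *\<^sub>v z) $ i = z $ i" .
  qed (use J z in simp)
  have "y = Ui *\<^sub>v (J *\<^sub>v ((Vi * V) *\<^sub>v z))" unfolding ViV yz using z Jz by simp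
  also have "\<dots> = A *\<^sub>v (V *\<^sub>v z)" unfolding AJ using Ui J Vi V z
    by (simp add: assoc_mult_mat_vec[of _ m m _ m] assoc_mult_mat[of _ m m _ m _ m])
  finally show ?thesis using V z by auto
qed

lemma bilin_transfer:
  fixes P F G :: "'a::field mat"
  assumes P: "P \<in> carrier_mat k k" and F: "F \<in> carrier_mat k k"
    and PFP: "transpose_mat P * F * P = G"
    and v: "v \<in> carrier_vec k" and w: "w \<in> carrier_vec k"
  shows "w \<bullet> (G *\<^sub>v v) = (P *\<^sub>v w) \<bullet> (F *\<^sub>v (P *\<^sub>v v))"
proof -
  have "G *\<^sub>v v = transpose_mat P *\<^sub>v (F *\<^sub>v (P *\<^sub>v v))"
    unfolding PFP[symmetric] using P F v
    by (simp add: assoc_mult_mat_vec[of _ k k _ k])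
  then have "w \<bullet> (G *\<^sub>v v) = (transpose_mat P *\<^sub>v (F *\<^sub>v (P *\<^sub>v v))) \<bullet> w"
    using P F v w by (simp add: comm_scalar_prod[of w k])
  also have "\<dots> = (F *\<^sub>v (P *\<^sub>v v)) \<bullet> (P *\<^sub>v w)"
    by (rule transpose_vec_mult_scalar[OF P w]) (use P F v in auto)
  also have "\<dots> = (P *\<^sub>v w) \<bullet> (F *\<^sub>v (P *\<^sub>v v))"
    by (rule comm_scalar_prod[of _ k]) (use P F v w in auto)
  finally show ?thesis .
qed

lemma stable_isotropic:
  fixes M N :: "'a::field mat"
  assumes M: "M \<in> carrier_mat n n" and N: "N \<in> carrier_mat n n" and n: "0 < n"
    and st: "stably_iso n M N"
  shows "\<exists>x y. x \<in> carrier_vec n \<and> y \<in> carrier_vec n \<and> (x \<noteq> 0\<^sub>v n \<or> y \<noteq> 0\<^sub>v n)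
     \<and> x \<bullet> (M *\<^sub>v x) = y \<bullet> (N *\<^sub>v y)"
proof -
  from st obtain m C where nd: "nondeg_sym m C"
    and cg: "congruent_mat (n + m) (four_block_mat M (0\<^sub>m n m) (0\<^sub>m m n) C)
                            (four_block_mat N (0\<^sub>m n m) (0\<^sub>m m n) C)"
    unfolding stably_iso_def by blast
  have C: "C \<in> carrier_mat m m" and dC: "det C \<noteq> 0" using nd unfolding nondeg_sym_def by auto
  define F where "F = four_block_mat M (0\<^sub>m n m) (0\<^sub>m m n) C"
  define G where "G = four_block_mat N (0\<^sub>m n m) (0\<^sub>m m n) C"
  from cg obtain P where P: "P \<in> carrier_mat (n+m) (n+m)" and PFP: "transpose_mat P * F * P = G"
    unfolding congruent_mat_def F_def G_def by blast
  have F: "F \<in> carrier_mat (n+m) (n+m)" unfolding F_def using M C by auto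
  have G: "G \<in> carrier_mat (n+m) (n+m)" unfolding G_def using N C by auto
  obtain P11 P12 P21 P22 where sb: "split_block P n n = (P11, P12, P21, P22)" by (metis prod_cases4)
  note spl = split_block[OF sb, of m m]
  have P11: "P11 \<in> carrier_mat n n" and P12: "P12 \<in> carrier_mat n m" and P21: "P21 \<in> carrier_mat m n"
    and P22: "P22 \<in> carrier_mat m m" and Pb: "P = four_block_mat P11 P12 P21 P22" using spl P by auto
  have Pv: "P *\<^sub>v (y @\<^sub>v c) = (P11 *\<^sub>v y + P12 *\<^sub>v c) @\<^sub>v (P21 *\<^sub>v y + P22 *\<^sub>v c)"
    if "y \<in> carrier_vec n" "c \<in> carrier_vec m" for y c
    unfolding Pb by (rule four_block_mat_mult_vec[OF P11 P12 P21 P22 that])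
  have Fv: "F *\<^sub>v (x @\<^sub>v c) = (M *\<^sub>v x) @\<^sub>v (C *\<^sub>v c)"
    if "x \<in> carrier_vec n" "c \<in> carrier_vec m" for x c
    unfolding F_def using four_block_mat_mult_vec[OF M _ _ C that, of "0\<^sub>m n m" "0\<^sub>m m n"] that M C by simp
  have Gv: "G *\<^sub>v (x @\<^sub>v c) = (N *\<^sub>v x) @\<^sub>v (C *\<^sub>v c)"
    if "x \<in> carrier_vec n" "c \<in> carrier_vec m" for x c
    unfolding G_def using four_block_mat_mult_vec[OF N _ _ C that, of "0\<^sub>m n m" "0\<^sub>m m n"] that N C by simp
  note tr = bilin_transfer[OF P F PFP]
  show ?thesis
  proof (cases "\<exists>y c. y \<in> carrier_vec n \<and> c \<in> carrier_vec m \<and> P21 *\<^sub>v y + P22 *\<^sub>v c = c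
                   \<and> (y \<noteq> 0\<^sub>v n \<or> P11 *\<^sub>v y + P12 *\<^sub>v c \<noteq> 0\<^sub>v n)")
    case True
    then obtain y c where y: "y \<in> carrier_vec n" and c: "c \<in> carrier_vec m"
      and fx: "P21 *\<^sub>v y + P22 *\<^sub>v c = c" and nz: "y \<noteq> 0\<^sub>v n \<or> P11 *\<^sub>v y + P12 *\<^sub>v c \<noteq> 0\<^sub>v n" by blast
    define x where "x = P11 *\<^sub>v y + P12 *\<^sub>v c"
    have x: "x \<in> carrier_vec n" unfolding x_def using P11 P12 y c by auto
    have yc: "y @\<^sub>v c \<in> carrier_vec (n+m)" using y c by auto
    have PV: "P *\<^sub>v (y @\<^sub>v c) = x @\<^sub>v c" unfolding Pv[OF y c] fx x_def ..
    have "(y @\<^sub>v c) \<bullet> (G *\<^sub>v (y @\<^sub>v c)) = (x @\<^sub>v c) \<bullet> (F *\<^sub>v (x @\<^sub>v c))"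
      using tr[OF yc yc] unfolding PV .
    then have "y \<bullet> (N *\<^sub>v y) + c \<bullet> (C *\<^sub>v c) = x \<bullet> (M *\<^sub>v x) + c \<bullet> (C *\<^sub>v c)"
      unfolding Gv[OF y c] Fv[OF x c]
      using scalar_prod_append[of y n c m "N *\<^sub>v y" "C *\<^sub>v c"] scalar_prod_append[of x n c m "M *\<^sub>v x" "C *\<^sub>v c"]
        x y c M N C by auto
    then have "x \<bullet> (M *\<^sub>v x) = y \<bullet> (N *\<^sub>v y)" by simp
    then show ?thesis using x y nz unfolding x_def[symmetric] by blast
  next
    case False
    then have bad: "\<And>y c. y \<in> carrier_vec n \<Longrightarrow> c \<in> carrier_vec m \<Longrightarrow> P21 *\<^sub>v y + P22 *\<^sub>v c = c
        \<Longrightarrow> y = 0\<^sub>v n \<and> P11 *\<^sub>v y + P12 *\<^sub>v c = 0\<^sub>v n" by blast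
    define A where "A = P22 - 1\<^sub>m m"
    have A: "A \<in> carrier_mat m m" unfolding A_def using P22 by auto
    define e :: "'a vec" where "e = unit_vec n 0"
    have e0: "e \<noteq> 0\<^sub>v n"
    proof
      assume "e = 0\<^sub>v n"
      then have "e $ 0 = (0\<^sub>v n :: 'a vec) $ 0" by simp
      then show False unfolding e_def using n by simp
    qed
    have e: "e \<in> carrier_vec n" "e \<noteq> 0\<^sub>v n" unfolding e_def using n e0 e_def by auto
    define y1 where "y1 = P21 *\<^sub>v e"
    have y1: "y1 \<in> carrier_vec m" unfolding y1_def using P21 e by auto
    have Ac: "A *\<^sub>v c = P22 *\<^sub>v c - c" if "c \<in> carrier_vec m" for c
      unfolding A_def using P22 that by (simp add: minus_mult_distrib_mat_vec)
    have b: "transpose_mat A *\<^sub>v (C *\<^sub>v c) = 0\<^sub>v m \<and> y1 \<bullet> (C *\<^sub>v c) = 0"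
      if c: "c \<in> carrier_vec m" and Ac0: "A *\<^sub>v c = 0\<^sub>v m" for c
    proof -
      have fixc: "P22 *\<^sub>v c = c"
      proof (rule eq_vecI)
        fix i assume i: "i < dim_vec c"
        have "(A *\<^sub>v c) $ i = 0" using Ac0 i c by simp
        then show "(P22 *\<^sub>v c) $ i = c $ i" using Ac[OF c] i c P22 by simp
      qed (use P22 c in simp)
      have "P21 *\<^sub>v 0\<^sub>v n + P22 *\<^sub>v c = c" using P21 P22 c fixc by auto
      from bad[OF _ c this] have "P12 *\<^sub>v c = 0\<^sub>v n" using P11 P12 c by auto
      have z: "0\<^sub>v n @\<^sub>v c \<in> carrier_vec (n+m)" using c by auto
      have Pz: "P *\<^sub>v (0\<^sub>v n @\<^sub>v c) = 0\<^sub>v n @\<^sub>v c"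
        unfolding Pv[OF zero_carrier_vec c] using P11 P12 P21 P22 c fixc \<open>P12 *\<^sub>v c = 0\<^sub>v n\<close> by auto
      have key: "(P21 *\<^sub>v y' + A *\<^sub>v c') \<bullet> (C *\<^sub>v c) = 0" if y': "y' \<in> carrier_vec n" and c': "c' \<in> carrier_vec m" for y' c'
      proof -
        have w: "y' @\<^sub>v c' \<in> carrier_vec (n+m)" using y' c' by auto
        have "(y' @\<^sub>v c') \<bullet> (G *\<^sub>v (0\<^sub>v n @\<^sub>v c)) = (P *\<^sub>v (y' @\<^sub>v c')) \<bullet> (F *\<^sub>v (P *\<^sub>v (0\<^sub>v n @\<^sub>v c)))"
          by (rule tr[OF z w])
        then have "c' \<bullet> (C *\<^sub>v c) = (P21 *\<^sub>v y' + P22 *\<^sub>v c') \<bullet> (C *\<^sub>v c)"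
          unfolding Pz Pv[OF y' c'] Gv[OF zero_carrier_vec c] Fv[OF zero_carrier_vec c]
          using scalar_prod_append[of y' n c' m "N *\<^sub>v 0\<^sub>v n" "C *\<^sub>v c"]
            scalar_prod_append[of "P11 *\<^sub>v y' + P12 *\<^sub>v c'" n "P21 *\<^sub>v y' + P22 *\<^sub>v c'" m "M *\<^sub>v 0\<^sub>v n" "C *\<^sub>v c"]
            y' c' c P11 P12 P21 P22 M N C by auto
        moreover have "(P21 *\<^sub>v y' + P22 *\<^sub>v c') \<bullet> (C *\<^sub>v c) = (P21 *\<^sub>v y') \<bullet> (C *\<^sub>v c) + (P22 *\<^sub>v c') \<bullet> (C *\<^sub>v c)"
          by (rule add_scalar_prod_distrib[of _ m]) (use y' c' c P21 P22 C in auto)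
        moreover have "(P21 *\<^sub>v y' + (P22 *\<^sub>v c' - c')) \<bullet> (C *\<^sub>v c) = (P21 *\<^sub>v y') \<bullet> (C *\<^sub>v c) + (P22 *\<^sub>v c' - c') \<bullet> (C *\<^sub>v c)"
          by (rule add_scalar_prod_distrib[of _ m]) (use y' c' c P21 P22 C in auto)
        moreover have "(P22 *\<^sub>v c' - c') \<bullet> (C *\<^sub>v c) = (P22 *\<^sub>v c') \<bullet> (C *\<^sub>v c) - c' \<bullet> (C *\<^sub>v c)"
          by (rule minus_scalar_prod_distrib[of _ m]) (use y' c' c P21 P22 C in auto)
        ultimately show ?thesis unfolding Ac[OF c'] by simp
      qed
      have t1: "y1 \<bullet> (C *\<^sub>v c) = 0" using key[OF e(1), of "0\<^sub>v m"] A P21 e unfolding y1_def by simp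
      have t2: "transpose_mat A *\<^sub>v (C *\<^sub>v c) = 0\<^sub>v m"
      proof (rule eq_vecI)
        fix i assume i: "i < dim_vec (0\<^sub>v m :: 'a vec)"
        then have i: "i < m" by simp
        have "(transpose_mat A *\<^sub>v (C *\<^sub>v c)) \<bullet> unit_vec m i = (C *\<^sub>v c) \<bullet> (A *\<^sub>v unit_vec m i)"
          by (rule transpose_vec_mult_scalar[OF A]) (use C c in auto)
        also have "\<dots> = (A *\<^sub>v unit_vec m i) \<bullet> (C *\<^sub>v c)"
          by (rule comm_scalar_prod[of _ m]) (use C c A in auto)
        also have "\<dots> = 0" using key[of "0\<^sub>v n" "unit_vec m i"] A P21 by simp
        finally show "(transpose_mat A *\<^sub>v (C *\<^sub>v c)) $ i = 0\<^sub>v m $ i"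
          using i A C c by (simp add: scalar_prod_right_unit)
      qed (use A in simp)
      show ?thesis using t1 t2 by simp
    qed
    from LA[OF A C dC y1 b] obtain c0 where c0: "c0 \<in> carrier_vec m" and y1c: "y1 = A *\<^sub>v c0" by blast
    have "P21 *\<^sub>v e + P22 *\<^sub>v (- c0) = - c0"
    proof -
      have "P21 *\<^sub>v e = P22 *\<^sub>v c0 - c0" using y1c Ac[OF c0] unfolding y1_def by simp
      then show ?thesis
      proof -
        assume h: "P21 *\<^sub>v e = P22 *\<^sub>v c0 - c0"
        show ?thesis
        proof (rule eq_vecI)
          fix i assume i: "i < dim_vec (- c0)"
          then have i: "i < m" using c0 by simp
          have "(P21 *\<^sub>v e) $ i = (P22 *\<^sub>v c0) $ i - c0 $ i" unfolding h using i c0 P22 by simp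
          then show "(P21 *\<^sub>v e + P22 *\<^sub>v - c0) $ i = (- c0) $ i"
            using i c0 P22 P21 e mat_mult_uminus_vec[OF P22 c0] by simp
        qed (use P21 P22 c0 in simp)
      qed
    qed
    from bad[OF e(1) _ this] c0 e show ?thesis by auto
  qed
qed


lemma F2_form:
  fixes A B :: "'a::field poly"
  assumes "(A, B) \<in> F2 TYPE('a)"
  shows "\<exists>a0 a1 b0 b1. A = [:a0, a1, 1:] \<and> B = [:b0, b1:] \<and> res22 A B \<noteq> 0"
proof -
  have dA: "degree A = 2" and cA: "coeff A 2 = 1" and dB: "degree B < 2" and u: "res22 A B dvd 1"
    using assms unfolding F2_def by auto
  have Ae: "A = [:coeff A 0, coeff A 1, 1:]"
  proof (rule poly_eqI)
    fix n show "coeff A n = coeff [:coeff A 0, coeff A 1, 1:] n"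
    proof (cases "n \<le> 2")
      case True
      then have "n = 0 \<or> n = 1 \<or> n = 2" by auto
      then show ?thesis using cA by (auto simp: numeral_2_eq_2)
    next
      case False
      then have "coeff A n = 0" using dA by (intro coeff_eq_0) simp
      then show ?thesis using False by (simp add: coeff_pCons split: nat.split)
    qed
  qed
  have Be: "B = [:coeff B 0, coeff B 1:]"
  proof (rule poly_eqI)
    fix n show "coeff B n = coeff [:coeff B 0, coeff B 1:] n"
    proof (cases "n \<le> 1")
      case True
      then have "n = 0 \<or> n = 1" by auto
      then show ?thesis by auto
    next
      case False
      then have "coeff B n = 0" using dB by (intro coeff_eq_0) simp
      then show ?thesis using False by (simp add: coeff_pCons split: nat.split)
    qed
  qed
  have "res22 A B \<noteq> 0" using u by auto
  then show ?thesis using Ae Be by blast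
qed

lemma det_mat2:
  fixes f :: "nat \<times> nat \<Rightarrow> 'a::comm_ring_1"
  shows "det (mat 2 2 f) = f (0,0) * f (1,1) - f (1,0) * f (0,1)"
  by (simp add: numeral_2_eq_2 det_mat_expand det_mat0 lessThan_Suc algebra_simps)

lemma bez2_det:
  fixes a0 a1 b0 b1 :: "'a::field"
  shows "det (bez2 [:a0, a1, 1:] [:b0, b1:]) = (a1*b0 - a0*b1)*b1 - b0^2"
  unfolding bez2_eq det_mat2 by (simp add: power2_eq_square)

lemma bez2_qf:
  fixes a0 a1 b0 b1 :: "'a::field" and x :: "'a vec"
  assumes x: "x \<in> carrier_vec 2"
  shows "x \<bullet> (bez2 [:a0, a1, 1:] [:b0, b1:] *\<^sub>v x)
     = (a1*b0 - a0*b1) * (x$0)^2 + 2*b0*(x$0)*(x$1) + b1*(x$1)^2"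
  using x unfolding bez2_eq
  by (simp add: scalar_prod_def mult_mat_vec_def numeral_2_eq_2 power2_eq_square algebra_simps)

lemma vec2_nz:
  fixes x :: "'a::zero vec"
  assumes x: "x \<in> carrier_vec 2" and nz: "x \<noteq> 0\<^sub>v 2"
  shows "x$0 \<noteq> 0 \<or> x$1 \<noteq> 0"
proof (rule ccontr)
  assume "\<not> (x$0 \<noteq> 0 \<or> x$1 \<noteq> 0)"
  then have "x = 0\<^sub>v 2" using x by (intro eq_vecI) (auto simp: less_2_cases_iff)
  then show False using nz by simp
qed

theorem corollary3p20:
  fixes f g :: "'a::field poly \<times> 'a poly"
  assumes "f \<in> F2 TYPE('a)" and "g \<in> F2 TYPE('a)"
    and "stably_iso 2 (bez2 (fst f) (snd f)) (bez2 (fst g) (snd g))"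
    and "det (bez2 (fst f) (snd f)) = det (bez2 (fst g) (snd g))"
  shows "naive_htpy_equiv f g"
proof -
  obtain A B where fAB: "f = (A, B)" by (cases f)
  obtain A' B' where gAB: "g = (A', B')" by (cases g)
  from F2_form[of A B] assms(1) fAB obtain a0 a1 b0 b1 where
    A: "A = [:a0, a1, 1:]" and B: "B = [:b0, b1:]" and resf: "res22 A B \<noteq> 0" by auto
  from F2_form[of A' B'] assms(2) gAB obtain c0 c1 e0 e1 where
    A': "A' = [:c0, c1, 1:]" and B': "B' = [:e0, e1:]" and resg: "res22 A' B' \<noteq> 0" by auto
  define p where "p = a1*b0 - a0*b1"
  define p' where "p' = c1*e0 - c0*e1"
  define d where "d = p*b1 - b0^2"
  have dd: "d = p'*e1 - e0^2" using assms(4) unfolding fAB gAB A B A' B' fst_conv snd_conv bez2_det d_def p_def p'_def .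
  have d0: "d \<noteq> 0" using resf unfolding A B res22_eq d_def p_def
    by (auto simp: algebra_simps power2_eq_square)
  have f1: "naive_htpy_equiv f (liftF p b0 b1)" unfolding fAB A B p_def
    by (rule lift_to_f) (use resf A B in simp)
  have g1: "naive_htpy_equiv g (liftF p' e0 e1)" unfolding gAB A' B' p'_def
    by (rule lift_to_f) (use resg A' B' in simp)
  have d0': "p'*e1 - e0^2 \<noteq> 0" using d0 dd by simp
  have d0f: "p*b1 - b0^2 \<noteq> 0" using d0 unfolding d_def .
  have "naive_htpy_equiv (liftF p b0 b1) (liftF p' e0 e1)"
  proof (cases "\<exists>e. e^2 = -d")
    case True
    then obtain e where e: "e^2 = -d" by blast
    have 1: "naive_htpy_equiv (liftF p b0 b1) (liftF 0 e 0)"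
      by (rule canon_iso[OF d0f]) (use e d_def in simp)
    have 2: "naive_htpy_equiv (liftF p' e0 e1) (liftF 0 e 0)"
      by (rule canon_iso[OF d0']) (use e dd in simp)
    show ?thesis by (rule equiv_trans[OF 1 equiv_sym[OF 2]])
  next
    case False
    have M: "bez2 A B \<in> carrier_mat 2 2" unfolding A B bez2_eq by simp
    have N: "bez2 A' B' \<in> carrier_mat 2 2" unfolding A' B' bez2_eq by simp
    from stable_isotropic[OF M N _ assms(3)[unfolded fAB gAB fst_conv snd_conv]]
    obtain x y where x: "x \<in> carrier_vec 2" and y: "y \<in> carrier_vec 2"
      and nz: "x \<noteq> 0\<^sub>v 2 \<or> y \<noteq> 0\<^sub>v 2" and eq: "x \<bullet> (bez2 A B *\<^sub>v x) = y \<bullet> (bez2 A' B' *\<^sub>v y)" by auto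
    define c where "c = p * (x$0)^2 + 2*b0*(x$0)*(x$1) + b1*(x$1)^2"
    have cy: "c = p' * (y$0)^2 + 2*e0*(y$0)*(y$1) + e1*(y$1)^2"
      using eq unfolding A B A' B' bez2_qf[OF x] bez2_qf[OF y] c_def p_def p'_def .
    have noiso: "\<not> (\<exists>e. e^2 = -d)" using False .
    have xnz: "x \<noteq> 0\<^sub>v 2"
    proof
      assume x0: "x = 0\<^sub>v 2"
      then have yn: "y$0 \<noteq> 0 \<or> y$1 \<noteq> 0" using nz vec2_nz[OF y] by auto
      have "c = 0" unfolding c_def x0 by simp
      then have "p' * (y$0)^2 + 2*e0*(y$0)*(y$1) + e1*(y$1)^2 = 0" using cy by simp
      from iso_square[OF yn this] show False using noiso dd by (simp add: algebra_simps)
    qed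
    have xn: "x$0 \<noteq> 0 \<or> x$1 \<noteq> 0" by (rule vec2_nz[OF x xnz])
    have c0: "c \<noteq> 0"
    proof
      assume "c = 0"
      then have "p * (x$0)^2 + 2*b0*(x$0)*(x$1) + b1*(x$1)^2 = 0" unfolding c_def .
      from iso_square[OF xn this] show False using noiso d_def by (simp add: algebra_simps)
    qed
    have ynz: "y$0 \<noteq> 0 \<or> y$1 \<noteq> 0"
    proof (rule ccontr)
      assume "\<not> (y$0 \<noteq> 0 \<or> y$1 \<noteq> 0)"
      then have "c = 0" using cy by simp
      then show False using c0 by simp
    qed
    have 1: "naive_htpy_equiv (liftF p b0 b1) (liftF c 0 ((p*b1 - b0^2)/c))"
      by (rule canon_aniso[OF d0f xn]) (use c_def c0 in auto)
    have 2: "naive_htpy_equiv (liftF p' e0 e1) (liftF c 0 ((p'*e1 - e0^2)/c))"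
      by (rule canon_aniso[OF d0' ynz]) (use cy c0 in auto)
    have eqd: "(p'*e1 - e0^2) = (p*b1 - b0^2)" using dd d_def by simp
    show ?thesis using equiv_trans[OF 1 equiv_sym[OF 2[unfolded eqd]]] .
  qed
  then show ?thesis using equiv_trans[OF f1] equiv_trans[OF _ equiv_sym[OF g1]] by blast
qed

end
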